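(* Let $T$ be a measurable transformation of a space $X$ preserving a probability measure $\mu$, let $f:X\to\mathbb R$ be measurable, and let $n>0$ be an integer. Then $f$ is aperiodic for $T$ if and only if $S_nf=\sum_{k=0}^{n-1}f\circ T^k$ is aperiodic for $T^n$.
   Context: A measurable $g:X\to\mathbb R$ is called periodic for a $\mu$-preserving map $S$ if there exist $c\neq 0$, $d\in\mathbb R$ and a measurable $u:X\to\mathbb R$ such that $g=u-u\circ S+d \bmod c$ $\mu$-almost everywhere; it is aperiodic for $S$ if it is not periodic, i.e. for every measurable $u$ and every $\lambda\ne0$, $g-u+u\circ S\bmod\lambda$ is not $\mu$-a.e. constant. *)

theory Defs
  imports "HOL-Probability.Probability"
begin

definition measure_preserving_map :: "'a measure \<Rightarrow> ('a \<Rightarrow> 'a) \<Rightarrow> bool" where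
  "measure_preserving_map M T \<longleftrightarrow> T \<in> measurable M M \<and> distr M M T = M"

definition periodic_for :: "'a measure \<Rightarrow> ('a \<Rightarrow> 'a) \<Rightarrow> ('a \<Rightarrow> real) \<Rightarrow> bool" where
  "periodic_for M S g \<longleftrightarrow>
     (\<exists>c d u. c \<noteq> (0::real) \<and> u \<in> borel_measurable M \<and>
        (AE x in M. \<exists>k::int. g x - (u x - u (S x) + d) = of_int k * c))"

definition aperiodic_for :: "'a measure \<Rightarrow> ('a \<Rightarrow> 'a) \<Rightarrow> ('a \<Rightarrow> real) \<Rightarrow> bool" where
  "aperiodic_for M S g \<longleftrightarrow> \<not> periodic_for M S g"

definition birkhoff_sum :: "('a \<Rightarrow> 'a) \<Rightarrow> nat \<Rightarrow> ('a \<Rightarrow> real) \<Rightarrow> 'a \<Rightarrow> real" where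
  "birkhoff_sum T n f x = (\<Sum>k<n. f ((T ^^ k) x))"

end

theory Submission
  imports Defs
begin

lemma mp_meas: "measure_preserving_map M T \<Longrightarrow> (T ^^ j) \<in> measurable M M"
  by (induction j) (auto simp: measure_preserving_map_def)

lemma mp_AE:
  assumes mp: "measure_preserving_map M T" and ae: "AE x in M. P x"
  shows "AE x in M. P (T x)"
proof -
  from ae obtain N where N: "{x \<in> space M. \<not> P x} \<subseteq> N" "emeasure M N = 0" "N \<in> sets M"
    by (auto elim: AE_E)
  have Tm: "T \<in> measurable M M" and d: "distr M M T = M" using mp by (auto simp: measure_preserving_map_def)
  have "emeasure M (T -` N \<inter> space M) = emeasure (distr M M T) N"
    using Tm N(3) by (simp add: emeasure_distr)
  also have "\<dots> = 0" using d N(2) by simp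
  finally have "emeasure M (T -` N \<inter> space M) = 0" .
  moreover have "T -` N \<inter> space M \<in> sets M" using Tm N(3) by (simp add: measurable_sets)
  moreover have "{x \<in> space M. \<not> P (T x)} \<subseteq> T -` N \<inter> space M"
    using N(1) measurable_space[OF Tm] by blast
  ultimately show ?thesis by (intro AE_I) auto
qed

lemma mp_AE_funpow:
  assumes mp: "measure_preserving_map M T" and ae: "AE x in M. P x"
  shows "AE x in M. P ((T ^^ j) x)"
proof (induction j)
  case 0 then show ?case using ae by simp
next
  case (Suc j)
  have "AE x in M. P ((T ^^ j) (T x))" using mp_AE[OF mp Suc] .
  then show ?case by (simp add: funpow_Suc_right del: funpow.simps)
qed

lemma bs_meas:
  assumes "measure_preserving_map M T" "f \<in> borel_measurable M"
  shows "birkhoff_sum T j f \<in> borel_measurable M"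
proof -
  have "(\<lambda>x. \<Sum>k<j. f ((T ^^ k) x)) \<in> borel_measurable M"
    using assms mp_meas[OF assms(1)] by (intro borel_measurable_sum) (auto intro: measurable_compose)
  then show ?thesis by (simp add: birkhoff_sum_def[abs_def])
qed

lemma bs_Suc: "birkhoff_sum T (Suc j) f x = f x + birkhoff_sum T j f (T x)"
  unfolding birkhoff_sum_def sum.lessThan_Suc_shift by (simp add: funpow_Suc_right del: funpow.simps)

lemma bs_0: "birkhoff_sum T 0 f x = 0"
  unfolding birkhoff_sum_def by simp

theorem lemma2p1:
  fixes M :: "'a measure" and T :: "'a \<Rightarrow> 'a" and f :: "'a \<Rightarrow> real" and n :: nat
  assumes "prob_space M"
    and "measure_preserving_map M T"
    and "f \<in> borel_measurable M"
    and "n > 0"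
  shows "aperiodic_for M T f \<longleftrightarrow> aperiodic_for M (T ^^ n) (birkhoff_sum T n f)"
proof -
  note mp = assms(2)
  have "periodic_for M T f \<longleftrightarrow> periodic_for M (T ^^ n) (birkhoff_sum T n f)"
  proof
    assume "periodic_for M T f"
    then obtain c d u where c: "c \<noteq> 0" and u: "u \<in> borel_measurable M"
      and ae: "AE x in M. \<exists>k::int. f x - (u x - u (T x) + d) = of_int k * c"
      unfolding periodic_for_def by blast
    have "AE x in M. \<forall>j. \<exists>k::int. f ((T^^j) x) - (u ((T^^j) x) - u (T ((T^^j) x)) + d) = of_int k * c"
      unfolding AE_all_countable using mp_AE_funpow[OF mp ae] by blast
    then have "AE x in M. \<exists>k::int. birkhoff_sum T n f x - (u x - u ((T^^n) x) + real n * d) = of_int k * c"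
    proof (rule AE_mp, intro AE_I2 impI)
      fix x assume h: "\<forall>j. \<exists>k::int. f ((T^^j) x) - (u ((T^^j) x) - u (T ((T^^j) x)) + d) = of_int k * c"
      have ex: "\<exists>k::int. f ((T^^j) x) = u ((T^^j) x) - u ((T^^Suc j) x) + d + of_int k * c" for j
      proof -
        from h obtain k :: int where "f ((T^^j) x) - (u ((T^^j) x) - u (T ((T^^j) x)) + d) = of_int k * c" by blast
        then show ?thesis by (intro exI[of _ k]) (simp add: algebra_simps)
      qed
      define K where "K j = (SOME k::int. f ((T^^j) x) = u ((T^^j) x) - u ((T^^Suc j) x) + d + of_int k * c)" for j
      have K: "f ((T^^j) x) = u ((T^^j) x) - u ((T^^Suc j) x) + d + of_int (K j) * c" for j
        unfolding K_def by (rule someI_ex[OF ex])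
      have "birkhoff_sum T n f x = (\<Sum>j<n. u ((T^^j) x) - u ((T^^Suc j) x) + d + of_int (K j) * c)"
        unfolding birkhoff_sum_def using K by (intro sum.cong) auto
      also have "\<dots> = (\<Sum>j<n. u ((T^^j) x) - u ((T^^Suc j) x)) + real n * d + of_int (\<Sum>j<n. K j) * c"
        by (simp add: sum.distrib sum_distrib_right)
      also have "(\<Sum>j<n. u ((T^^j) x) - u ((T^^Suc j) x)) = u x - u ((T^^n) x)"
        using sum_lessThan_telescope'[of "\<lambda>j. u ((T^^j) x)" n] by simp
      finally show "\<exists>k::int. birkhoff_sum T n f x - (u x - u ((T^^n) x) + real n * d) = of_int k * c"
        by (intro exI[of _ "\<Sum>j<n. K j"]) simp
    qed
    then show "periodic_for M (T ^^ n) (birkhoff_sum T n f)"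
      unfolding periodic_for_def using c u by blast
  next
    assume "periodic_for M (T ^^ n) (birkhoff_sum T n f)"
    then obtain c d v where c: "c \<noteq> 0" and v: "v \<in> borel_measurable M"
      and ae: "AE x in M. \<exists>k::int. birkhoff_sum T n f x - (v x - v ((T^^n) x) + d) = of_int k * c"
      unfolding periodic_for_def by blast
    define G where "G x j = birkhoff_sum T j f x + v ((T^^j) x)" for x j
    define u where "u x = (\<Sum>j<n. G x j) / real n" for x
    have um: "u \<in> borel_measurable M"
      unfolding u_def G_def
      using bs_meas[OF mp assms(3)] v mp_meas[OF mp]
      by (intro borel_measurable_divide borel_measurable_sum borel_measurable_add)
         (auto intro: measurable_compose)
    have "AE x in M. \<exists>k::int. f x - (u x - u (T x) + d / real n) = of_int k * (c / real n)"
    proof (rule AE_mp[OF ae], intro AE_I2 impI)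
      fix x assume "\<exists>k::int. birkhoff_sum T n f x - (v x - v ((T^^n) x) + d) = of_int k * c"
      then obtain k :: int where k: "birkhoff_sum T n f x - (v x - v ((T^^n) x) + d) = of_int k * c" by blast
      have GT: "G (T x) j = G x (Suc j) - f x" for j
        unfolding G_def by (simp add: bs_Suc funpow_Suc_right del: funpow.simps)
      have "real n * u (T x) = (\<Sum>j<n. G x (Suc j)) - real n * f x"
        unfolding u_def using assms(4) by (simp add: GT sum_subtractf)
      moreover have "(\<Sum>j<n. G x (Suc j)) - (\<Sum>j<n. G x j) = G x n - G x 0"
        using sum_lessThan_telescope[of "G x" n] by (simp add: sum_subtractf)
      moreover have "real n * u x = (\<Sum>j<n. G x j)" unfolding u_def using assms(4) by simp
      moreover have "G x n - G x 0 = d + of_int k * c" unfolding G_def using k by (simp add: bs_0)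
      ultimately have "real n * (f x - (u x - u (T x) + d / real n)) = real n * (of_int k * (c / real n))"
        using assms(4) by (simp add: algebra_simps)
      then have "f x - (u x - u (T x) + d / real n) = of_int k * (c / real n)"
        using assms(4) by (metis mult_left_cancel of_nat_0_less_iff order_less_irrefl)
      then show "\<exists>k::int. f x - (u x - u (T x) + d / real n) = of_int k * (c / real n)"
        by blast
    qed
    moreover have "c / real n \<noteq> 0" using c assms(4) by simp
    ultimately show "periodic_for M T f" unfolding periodic_for_def using um by blast
  qed
  then show ?thesis unfolding aperiodic_for_def by simp
qed

end
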